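(* Let $x$ be fixed observed data and let $p(x,z)$, $z\in\mathbb{R}^d$, be a positive, differentiable joint density (in $z$). Let $K\ge 1$, $n\in\{1,\dots,K\}$, and let $q$ be a probability density on $\mathbb{R}^d$ with finite second moment. Set $w(z):=p(x,z)/q(z)$. For a probability density $q_n$ on $\mathbb{R}^d$ with finite second moment define $$\mathcal{F}_n(q_n):=\mathbb{E}_{z_n\sim q_n}\Big[\mathbb{E}_{\{z_i\}_{i\neq n}\overset{i.i.d.}{\sim} q}\log\Big(\frac1K\frac{p(x,z_n)}{q_n(z_n)}+\frac1K\sum_{i\neq n}\frac{p(x,z_i)}{q(z_i)}\Big)\Big].$$ Suppose standard regularity conditions hold that allow interchanging derivatives (in $\epsilon$ and in $z$) with expectations/integrals. Then the Wasserstein gradient of $\mathcal{F}_n$ at $q_n=q$ is the map $\mathbb{R}^d\to\mathbb{R}^d$ given by $$\nabla^W[\mathcal{F}_n(q)](z_n)=\mathbb{E}_{\{z_i\}_{i\neq n}\overset{i.i.d.}{\sim} q}\left[\left(\frac{w(z_n)}{\sum_{i=1}^K w(z_i)}\right)^2\nabla_{z_n}\log w(z_n)\right].$$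
   Context: For a functional $\mathcal{F}$ on the space $\mathcal{P}_2(\mathbb{R}^d)$ of probability measures with finite second moment, the first variation at $\mu$ is a function $\frac{\delta\mathcal{F}(\mu)}{\delta\mu}:\mathbb{R}^d\to\mathbb{R}$ such that $\lim_{\epsilon\to0^+}\frac{\mathcal{F}(\mu+\epsilon\nu)-\mathcal{F}(\mu)}{\epsilon}=\int\frac{\delta\mathcal{F}(\mu)}{\delta\mu}(x)\,\nu(dx)$ for all signed measures $\nu$ with $\mu+\epsilon\nu\in\mathcal{P}_2(\mathbb{R}^d)$ for small $\epsilon>0$. The Wasserstein gradient is $[\nabla^W\mathcal{F}(\mu)](x):=\nabla_x\frac{\delta\mathcal{F}(\mu)}{\delta\mu}(x)$. In the displayed formula, $z_n$ is the point of evaluation and $z_i$, $i\ne n$, are integrated out. *)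

theory Defs
  imports "HOL-Probability.Probability"
begin

definition grad :: "('a::euclidean_space \<Rightarrow> real) \<Rightarrow> 'a \<Rightarrow> 'a" where
  "grad f z = (\<Sum>b\<in>Basis. frechet_derivative f (at z) b *\<^sub>R b)"

definition prob_density_P2 :: "('a::euclidean_space \<Rightarrow> real) \<Rightarrow> bool" where
  "prob_density_P2 q \<longleftrightarrow> q \<in> borel_measurable lborel \<and> (\<forall>z. 0 \<le> q z)
     \<and> integrable lborel q \<and> integral\<^sup>L lborel q = 1
     \<and> integrable lborel (\<lambda>z. norm z ^ 2 * q z)"

definition others :: "nat \<Rightarrow> nat \<Rightarrow> ('a::euclidean_space \<Rightarrow> real) \<Rightarrow> (nat \<Rightarrow> 'a) measure" where
  "others K n q = (\<Pi>\<^sub>M i\<in>{1..K} - {n}. density lborel (\<lambda>z. ennreal (q z)))"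

definition Ssum :: "nat \<Rightarrow> nat \<Rightarrow> ('a \<Rightarrow> real) \<Rightarrow> ('a \<Rightarrow> real) \<Rightarrow> (nat \<Rightarrow> 'a) \<Rightarrow> real" where
  "Ssum K n p q y = (\<Sum>i\<in>{1..K} - {n}. p (y i) / q (y i))"

text \<open>The functional F_n (p stands for z |-> p(x,z) with the data x fixed).\<close>
definition Fn :: "nat \<Rightarrow> nat \<Rightarrow> ('a::euclidean_space \<Rightarrow> real) \<Rightarrow> ('a \<Rightarrow> real)
                   \<Rightarrow> ('a \<Rightarrow> real) \<Rightarrow> real" where
  "Fn K n p q qn = (LINT zn|density lborel (\<lambda>z. ennreal (qn z)).
       LINT y|others K n q. ln ((1 / real K) * (p zn / qn zn) + (1 / real K) * Ssum K n p q y))"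

text \<open>Admissible perturbations: (densities of) finite signed measures nu such that
  q + eps nu is again a probability density with finite second moment for small eps > 0.\<close>
definition admissible :: "('a::euclidean_space \<Rightarrow> real) \<Rightarrow> ('a \<Rightarrow> real) \<Rightarrow> bool" where
  "admissible q h \<longleftrightarrow> integrable lborel h \<and>
     eventually (\<lambda>\<epsilon>. prob_density_P2 (\<lambda>z. q z + \<epsilon> * h z)) (at_right 0)"

definition first_variation :: "(('a::euclidean_space \<Rightarrow> real) \<Rightarrow> real) \<Rightarrow> ('a \<Rightarrow> real)
                                \<Rightarrow> ('a \<Rightarrow> real) \<Rightarrow> bool" where
  "first_variation F q g \<longleftrightarrow> (\<forall>h. admissible q h \<longrightarrow>
     ((\<lambda>\<epsilon>. (F (\<lambda>z. q z + \<epsilon> * h z) - F q) / \<epsilon>) \<longlongrightarrow> (LINT z|lborel. g z * h z)) (at_right 0))"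

end

theory Submission
  imports Defs
begin

lemma grad_eq: "(f has_derivative f') (at z) \<Longrightarrow> grad f z = (\<Sum>b\<in>Basis. f' b *\<^sub>R b)"
  unfolding grad_def using frechet_derivative_at by metis

lemma dL:
  fixes w :: "'a::euclidean_space \<Rightarrow> real"
  assumes d: "(w has_derivative Dw) (at u)" and "w u > 0" "s \<ge> 0" "K > 0"
  shows "((\<lambda>u. ln ((1 / real K) * w u + (1 / real K) * s)) has_derivative (\<lambda>v. Dw v / (w u + s))) (at u)"
proof -
  have pos: "(1 / real K) * w u + (1 / real K) * s > 0" using assms by (simp add: add_pos_nonneg)
  have g: "((\<lambda>u. (1 / real K) * w u + (1 / real K) * s) has_derivative (\<lambda>v. (1 / real K) * Dw v)) (at u)"
    by (intro has_derivative_add_const has_derivative_mult_right d)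
  have "((\<lambda>u. ln ((1 / real K) * w u + (1 / real K) * s)) has_derivative (\<lambda>v. (1 / real K) * Dw v * inverse ((1 / real K) * w u + (1 / real K) * s))) (at u)"
    by (rule has_derivative_ln[OF pos g])
  moreover have "\<And>v. (1 / real K) * Dw v * inverse ((1 / real K) * w u + (1 / real K) * s) = Dw v / (w u + s)"
    using assms pos by (simp add: field_simps)
  ultimately show ?thesis by simp
qed

lemma dR:
  fixes w :: "'a::euclidean_space \<Rightarrow> real"
  assumes d: "(w has_derivative Dw) (at u)" and "w u > 0" "s \<ge> 0"
  shows "((\<lambda>u. w u / (w u + s)) has_derivative (\<lambda>v. Dw v * s / (w u + s)^2)) (at u)"
proof -
  have pos: "w u + s \<noteq> 0" using assms by simp
  have pos2: "w u + s > 0" using assms by simp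
  have g: "((\<lambda>u. w u + s) has_derivative Dw) (at u)"
    by (intro has_derivative_add_const d)
  have "((\<lambda>u. w u / (w u + s)) has_derivative (\<lambda>h. (Dw h * (w u + s) - w u * Dw h) / ((w u + s) * (w u + s)))) (at u)"
    by (rule has_derivative_divide'[OF d g pos])
  moreover have "\<And>h. (Dw h * (w u + s) - w u * Dw h) / ((w u + s) * (w u + s)) = Dw h * s / (w u + s)^2"
    by (simp add: algebra_simps power2_eq_square)
  ultimately show ?thesis by simp
qed

lemma dlnw:
  fixes w :: "'a::euclidean_space \<Rightarrow> real"
  assumes d: "(w has_derivative Dw) (at u)" and "w u > 0"
  shows "((\<lambda>u. ln (w u)) has_derivative (\<lambda>v. Dw v / w u)) (at u)"
    apply (rule has_derivative_eq_rhs)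
     apply (rule derivative_eq_intros d assms(2))+
    using assms by (auto simp: field_simps)

lemma deps:
  fixes Q P H s :: real
  assumes "Q > 0" "P > 0" "s \<ge> 0" "K > 0"
  shows "((\<lambda>e. (Q + e * H) * ln ((1 / real K) * (P / (Q + e * H)) + (1 / real K) * s)) has_real_derivative
     H * ln ((1 / real K) * (P / Q) + (1 / real K) * s) - H * ((P/Q) / (P/Q + s))) (at_right 0)"
proof -
  have pos: "(1 / real K) * (P / (Q + 0 * H)) + (1 / real K) * s > 0" using assms by (simp add: add_pos_nonneg)
  have q0: "Q + 0 * H \<noteq> 0" using assms by simp
  have "((\<lambda>e. (Q + e * H) * ln ((1 / real K) * (P / (Q + e * H)) + (1 / real K) * s)) has_real_derivative
     H * ln ((1 / real K) * (P / Q) + (1 / real K) * s) - H * ((P/Q) / (P/Q + s))) (at 0)"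
    apply (rule DERIV_cong)
     apply (rule derivative_eq_intros refl pos q0)+
    using assms apply (simp add: field_simps power2_eq_square add_pos_nonneg)
    proof -
      have "H * P / (P + Q * s) = (H * P * Q) / ((P + Q * s) * Q)" using assms by simp
      then show "H * P / (P + Q * s) = H * (P * Q) / (P * Q + Q * (Q * s))" by (simp add: algebra_simps)
    qed
  then show ?thesis by (rule has_field_derivative_at_within)
qed

lemma pwl: fixes a s d :: real assumes "a > 0" "s \<ge> 0"
  shows "d / (a + s) - d * s / (a + s)^2 = (a / (a + s))^2 * (d / a)"
proof -
  have t: "a + s > 0" using assms by simp
  have "d / (a + s) - d * s / (a + s)^2 = d * a / (a + s)^2"
    using t by (simp add: power2_eq_square divide_simps) (simp add: algebra_simps)
  also have "\<dots> = (a / (a + s))^2 * (d / a)"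
    using assms t by (simp add: power2_eq_square divide_simps)
  finally show ?thesis .
qed
lemma fr: fixes a s :: real assumes "a > 0" "s \<ge> 0" shows "norm (a / (a + s)) \<le> 1"
proof -
  have "a / (a + s) \<le> 1" using assms by (simp add: divide_le_eq_1)
  moreover have "a / (a + s) \<ge> 0" using assms by simp
  ultimately show ?thesis by (metis abs_of_nonneg real_norm_def)
qed

lemma pt:
  fixes w :: "'a::euclidean_space \<Rightarrow> real"
  assumes wd: "w differentiable (at z)" and wp: "w z > 0" and s: "s \<ge> 0" and K: "K > 0"
  shows "grad (\<lambda>u. ln ((1 / real K) * w u + (1 / real K) * s)) z - grad (\<lambda>u. w u / (w u + s)) z
       = (w z / (w z + s))^2 *\<^sub>R grad (\<lambda>u. ln (w u)) z"
proof -
  define Dw where "Dw = frechet_derivative w (at z)"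
  have d: "(w has_derivative Dw) (at z)" using wd unfolding Dw_def frechet_derivative_works .
  have e1: "grad (\<lambda>u. ln ((1 / real K) * w u + (1 / real K) * s)) z = (\<Sum>b\<in>Basis. (Dw b / (w z + s)) *\<^sub>R b)"
    by (rule grad_eq[OF dL[OF d wp s K]])
  have e2: "grad (\<lambda>u. w u / (w u + s)) z = (\<Sum>b\<in>Basis. (Dw b * s / (w z + s)^2) *\<^sub>R b)"
    by (rule grad_eq[OF dR[OF d wp s]])
  have e3: "grad (\<lambda>u. ln (w u)) z = (\<Sum>b\<in>Basis. (Dw b / w z) *\<^sub>R b)"
    by (rule grad_eq[OF dlnw[OF d wp]])
  have pw: "Dw b / (w z + s) - Dw b * s / (w z + s)^2 = (w z / (w z + s))^2 * (Dw b / w z)" for b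
    by (rule pwl[OF wp s])
  show ?thesis unfolding e1 e2 e3
    by (simp add: scaleR_sum_right sum_subtractf[symmetric] scaleR_diff_left[symmetric] pw)
qed

lemma sum_upd: "n \<in> A \<Longrightarrow> finite A \<Longrightarrow> (\<Sum>i\<in>A. f ((y(n:=zn)) i)) = f zn + (\<Sum>i\<in>A-{n}. f (y i))"
  by (simp add: sum.remove)

lemma prob_others:
  assumes q: "prob_density_P2 q"
  shows "prob_space (others K n q)"
  unfolding others_def
proof (rule prob_space_PiM)
  fix i
  show "prob_space (density lborel (\<lambda>z. ennreal (q z)))"
  proof (rule prob_spaceI)
    have "emeasure (density lborel (\<lambda>z. ennreal (q z))) UNIV = (\<integral>\<^sup>+ z. ennreal (q z) \<partial>lborel)"
      using q unfolding prob_density_P2_def by (simp add: emeasure_density)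
    also have "\<dots> = ennreal (integral\<^sup>L lborel q)"
      using q unfolding prob_density_P2_def by (intro nn_integral_eq_integral) auto
    also have "\<dots> = 1" using q unfolding prob_density_P2_def by simp
    finally show "emeasure (density lborel (\<lambda>z. ennreal (q z))) (space (density lborel (\<lambda>z. ennreal (q z)))) = 1"
      by simp
  qed
qed

lemma Ssum_meas:
  fixes p q :: "'a::euclidean_space \<Rightarrow> real"
  assumes "p \<in> borel_measurable borel" "q \<in> borel_measurable borel"
  shows "Ssum K n p q \<in> borel_measurable (others K n q)"
  unfolding Ssum_def[abs_def] others_def
proof (rule borel_measurable_sum)
  fix i assume i: "i \<in> {1..K} - {n}"
  have "(\<lambda>y. y i) \<in> measurable (\<Pi>\<^sub>M i\<in>{1..K} - {n}. density lborel (\<lambda>z. ennreal (q z))) (density lborel (\<lambda>z. ennreal (q z)))"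
    using i by (rule measurable_component_singleton)
  have m: "(\<lambda>y. y i) \<in> measurable (\<Pi>\<^sub>M i\<in>{1..K} - {n}. density lborel (\<lambda>z. ennreal (q z))) borel"
  proof -
    have e: "measurable (\<Pi>\<^sub>M i\<in>{1..K} - {n}. density lborel (\<lambda>z. ennreal (q z))) (density lborel (\<lambda>z. ennreal (q z)))
           = measurable (\<Pi>\<^sub>M i\<in>{1..K} - {n}. density lborel (\<lambda>z. ennreal (q z))) borel"
      by (rule measurable_cong_sets) simp_all
    show ?thesis using \<open>(\<lambda>y. y i) \<in> _\<close> unfolding e .
  qed
  have "(\<lambda>z. p z / q z) \<in> borel_measurable borel" using assms by measurable
  from measurable_comp[OF m this]
  show "(\<lambda>y. p (y i) / q (y i)) \<in> borel_measurable (\<Pi>\<^sub>M i\<in>{1..K} - {n}. density lborel (\<lambda>z. ennreal (q z)))"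
    by (simp add: o_def)
qed

theorem proposition1:
  fixes p :: "'b \<Rightarrow> 'a::euclidean_space \<Rightarrow> real" and x :: 'b
    and q :: "'a \<Rightarrow> real" and K n :: nat
  assumes p_pos: "\<And>z. p x z > 0"
    and p_diff: "\<And>z. p x differentiable (at z)"
    and K: "K \<ge> 1" and n: "n \<in> {1..K}"
    and q: "prob_density_P2 q"
    and q_pos: "\<And>z. q z > 0"
    and q_diff: "\<And>z. q differentiable (at z)"
    \<comment> \<open>regularity: interchange of the derivative in epsilon with the integrals\<close>
    and reg_eps: "\<And>h D. admissible q h \<Longrightarrow>
        (\<And>z y. ((\<lambda>\<epsilon>. (q z + \<epsilon> * h z) * ln ((1 / real K) * (p x z / (q z + \<epsilon> * h z))
                     + (1 / real K) * Ssum K n (p x) q y)) has_real_derivative D z y) (at_right 0)) \<Longrightarrow>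
        ((\<lambda>\<epsilon>. (Fn K n (p x) q (\<lambda>z. q z + \<epsilon> * h z) - Fn K n (p x) q q) / \<epsilon>)
           \<longlongrightarrow> (LINT z|lborel. LINT y|others K n q. D z y)) (at_right 0)"
    \<comment> \<open>regularity: integrability and interchange of the gradient in z with the expectation\<close>
    and reg_int: "\<And>z. integrable (others K n q)
        (\<lambda>y. ln ((1 / real K) * (p x z / q z) + (1 / real K) * Ssum K n (p x) q y))"
    and reg_z1: "\<And>z. integrable (others K n q)
          (\<lambda>y. grad (\<lambda>u. ln ((1 / real K) * (p x u / q u) + (1 / real K) * Ssum K n (p x) q y)) z)
        \<and> (\<lambda>u. LINT y|others K n q. ln ((1 / real K) * (p x u / q u) + (1 / real K) * Ssum K n (p x) q y))
            differentiable (at z)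
        \<and> grad (\<lambda>u. LINT y|others K n q. ln ((1 / real K) * (p x u / q u) + (1 / real K) * Ssum K n (p x) q y)) z
          = (LINT y|others K n q.
               grad (\<lambda>u. ln ((1 / real K) * (p x u / q u) + (1 / real K) * Ssum K n (p x) q y)) z)"
    and reg_z2: "\<And>z. integrable (others K n q)
          (\<lambda>y. grad (\<lambda>u. (p x u / q u) / (p x u / q u + Ssum K n (p x) q y)) z)
        \<and> (\<lambda>u. LINT y|others K n q. (p x u / q u) / (p x u / q u + Ssum K n (p x) q y))
            differentiable (at z)
        \<and> grad (\<lambda>u. LINT y|others K n q. (p x u / q u) / (p x u / q u + Ssum K n (p x) q y)) z
          = (LINT y|others K n q. grad (\<lambda>u. (p x u / q u) / (p x u / q u + Ssum K n (p x) q y)) z)"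
  shows "\<exists>g. first_variation (Fn K n (p x) q) q g \<and> (\<forall>z. g differentiable (at z)) \<and>
           (\<forall>zn. grad g zn =
              (LINT y|others K n q.
                 ((p x zn / q zn) / (\<Sum>i\<in>{1..K}. p x ((y(n := zn)) i) / q ((y(n := zn)) i))) ^ 2
                   *\<^sub>R grad (\<lambda>u. ln (p x u / q u)) zn))"
proof -
  let ?M = "others K n q"
  let ?S = "Ssum K n (p x) q"
  define L where "L z y = ln ((1 / real K) * (p x z / q z) + (1 / real K) * ?S y)" for z y
  define R where "R z y = (p x z / q z) / (p x z / q z + ?S y)" for z y
  define g where "g z = (LINT y|?M. L z y) - (LINT y|?M. R z y)" for z
  have Kp: "K > 0" using K by simp
  interpret P: prob_space ?M using prob_others[OF q] .
  have S_nn: "?S y \<ge> 0" for y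
    unfolding Ssum_def using p_pos q_pos by (intro sum_nonneg) (simp add: less_imp_le)
  have pm: "p x \<in> borel_measurable borel"
    by (intro borel_measurable_continuous_onI differentiable_imp_continuous_on)
       (simp add: differentiable_on_def p_diff differentiable_at_withinI)
  have qm: "q \<in> borel_measurable borel" using q unfolding prob_density_P2_def by simp
  have Sm: "?S \<in> borel_measurable ?M" by (rule Ssum_meas[OF pm qm])
  have intL: "integrable ?M (L z)" for z using reg_int[of z] unfolding L_def .
  have intR: "integrable ?M (R z)" for z
  proof (rule P.integrable_const_bound[where B=1])
    show "AE y in ?M. norm (R z y) \<le> 1"
    proof (intro AE_I2)
      fix y
      have w: "p x z / q z > 0" using p_pos q_pos by simp
      show "norm (R z y) \<le> 1" unfolding R_def by (rule fr[OF w S_nn[of y]])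
    qed
    show "R z \<in> borel_measurable ?M" unfolding R_def using Sm by measurable
  qed
  have fv: "first_variation (Fn K n (p x) q) q g"
    unfolding first_variation_def
  proof (intro allI impI)
    fix h assume h: "admissible q h"
    let ?D = "\<lambda>z y. h z * L z y - h z * R z y"
    have "((\<lambda>\<epsilon>. (Fn K n (p x) q (\<lambda>z. q z + \<epsilon> * h z) - Fn K n (p x) q q) / \<epsilon>)
           \<longlongrightarrow> (LINT z|lborel. LINT y|?M. ?D z y)) (at_right 0)"
    proof (rule reg_eps[OF h])
      fix z y
      show "((\<lambda>\<epsilon>. (q z + \<epsilon> * h z) * ln ((1 / real K) * (p x z / (q z + \<epsilon> * h z))
                     + (1 / real K) * ?S y)) has_real_derivative ?D z y) (at_right 0)"
        unfolding L_def R_def by (rule deps[OF q_pos p_pos S_nn Kp])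
    qed
    moreover have "(LINT y|?M. ?D z y) = g z * h z" for z
    proof -
      have "(LINT y|?M. ?D z y) = (LINT y|?M. h z * L z y) - (LINT y|?M. h z * R z y)"
        by (rule Bochner_Integration.integral_diff) (auto intro: intL intR)
      also have "\<dots> = g z * h z" unfolding g_def by (simp add: algebra_simps)
      finally show ?thesis .
    qed
    ultimately show "((\<lambda>\<epsilon>. (Fn K n (p x) q (\<lambda>z. q z + \<epsilon> * h z) - Fn K n (p x) q q) / \<epsilon>)
           \<longlongrightarrow> (LINT z|lborel. g z * h z)) (at_right 0)" by simp
  qed
  have d1: "(\<lambda>u. LINT y|?M. L u y) differentiable (at z)" for z
    using reg_z1[of z] unfolding L_def by simp
  have d2: "(\<lambda>u. LINT y|?M. R u y) differentiable (at z)" for z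
    using reg_z2[of z] unfolding R_def by simp
  have gd: "g differentiable (at z)" for z
    unfolding g_def[abs_def] by (intro differentiable_diff d1 d2)
  have gg: "grad g zn = grad (\<lambda>u. LINT y|?M. L u y) zn - grad (\<lambda>u. LINT y|?M. R u y) zn" for zn
  proof -
    have "(g has_derivative (\<lambda>v. frechet_derivative (\<lambda>u. LINT y|?M. L u y) (at zn) v
                  - frechet_derivative (\<lambda>u. LINT y|?M. R u y) (at zn) v)) (at zn)"
      unfolding g_def[abs_def]
      by (intro has_derivative_diff d1[unfolded frechet_derivative_works] d2[unfolded frechet_derivative_works])
    from grad_eq[OF this] show ?thesis
      unfolding grad_def by (simp add: scaleR_diff_left sum_subtractf)
  qed
  have main: "grad g zn =
              (LINT y|others K n q.
                 ((p x zn / q zn) / (\<Sum>i\<in>{1..K}. p x ((y(n := zn)) i) / q ((y(n := zn)) i))) ^ 2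
                   *\<^sub>R grad (\<lambda>u. ln (p x u / q u)) zn)" for zn
  proof -
    have i1: "integrable ?M (\<lambda>y. grad (\<lambda>u. L u y) zn)" using reg_z1[of zn] unfolding L_def by simp
    have i2: "integrable ?M (\<lambda>y. grad (\<lambda>u. R u y) zn)" using reg_z2[of zn] unfolding R_def by simp
    have "grad g zn = (LINT y|?M. grad (\<lambda>u. L u y) zn) - (LINT y|?M. grad (\<lambda>u. R u y) zn)"
      unfolding gg using reg_z1[of zn] reg_z2[of zn] unfolding L_def R_def by simp
    also have "\<dots> = (LINT y|?M. grad (\<lambda>u. L u y) zn - grad (\<lambda>u. R u y) zn)"
      by (rule Bochner_Integration.integral_diff[symmetric, OF i1 i2])
    also have "\<dots> = (LINT y|others K n q.
                 ((p x zn / q zn) / (\<Sum>i\<in>{1..K}. p x ((y(n := zn)) i) / q ((y(n := zn)) i))) ^ 2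
                   *\<^sub>R grad (\<lambda>u. ln (p x u / q u)) zn)"
    proof (rule Bochner_Integration.integral_cong[OF refl])
      fix y
      have wd: "(\<lambda>u. p x u / q u) differentiable (at zn)"
        using p_diff q_diff q_pos by (intro differentiable_divide) (auto simp: less_imp_neq[symmetric])
      have wp: "p x zn / q zn > 0" using p_pos q_pos by simp
      have su: "(\<Sum>i\<in>{1..K}. p x ((y(n := zn)) i) / q ((y(n := zn)) i)) = p x zn / q zn + ?S y"
        unfolding Ssum_def using sum_upd[OF n, of "\<lambda>v. p x v / q v" y zn] by simp
      show "grad (\<lambda>u. L u y) zn - grad (\<lambda>u. R u y) zn = 
                 ((p x zn / q zn) / (\<Sum>i\<in>{1..K}. p x ((y(n := zn)) i) / q ((y(n := zn)) i))) ^ 2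
                   *\<^sub>R grad (\<lambda>u. ln (p x u / q u)) zn"
        unfolding su L_def R_def using pt[OF wd wp S_nn[of y] Kp] by simp
    qed
    finally show ?thesis .
  qed
  show ?thesis by (intro exI[of _ g] conjI allI fv gd main)
qed

end
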